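(* There exists an absolute constant $c$ such that for all integers $n\ge 5$ and $k\ge t_{n-1}(cn)$, every function $\pi_{n,k}$ has maximum distortion at least $4$. In particular, there exist $n$ and $k$ such that every function $\pi_{n,k}$ has maximum distortion at least $4$ (equivalently, every set of functions assigning $n$ agents to $k$ tasks has maximum switching cost at least $4$).
   Context: For positive integers $n,k$, let $\mathcal S_{n,k}$ be the set of all multisets of size $n$ with elements from $[k]=\{1,\dots,k\}$. A function $\pi_{n,k}$ assigns to each $S\in\mathcal S_{n,k}$ a string $\pi_{n,k}(S)$ of length $n$ (positions indexed by $[n]$) whose letters, counted with multiplicity, form exactly the multiset $S$ (i.e. a permutation of $S$). For strings $X,Y$ of equal length, $d(X,Y)$ denotes their Hamming distance. For multisets $A,B$, the symmetric difference $A\oplus B$ is the multiset obtained by removing from $A$ and from $B$ their maximal common sub-multiset $A\cap B$ and taking the union of what remains. A pair $S,S'\in\mathcal S_{n,k}$ with $|S\oplus S'|=2$ has distortion $d(\pi_{n,k}(S),\pi_{n,k}(S'))$; the maximum distortion of $\pi_{n,k}$ is the maximum distortion over all pairs $S,S'\in\mathcal S_{n,k}$ with $|S\oplus S'|=2$. The tower function is defined by $t_1(x)=x$ and $t_{i+1}(x)=2^{t_i(x)}$. *)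

theory Defs
  imports Complex_Main "HOL-Library.Multiset"
begin

definition msets :: "nat \<Rightarrow> nat \<Rightarrow> nat multiset set" where
  "msets n k = {S. size S = n \<and> set_mset S \<subseteq> {1..k}}"

definition valid_assignment :: "nat \<Rightarrow> nat \<Rightarrow> (nat multiset \<Rightarrow> nat list) \<Rightarrow> bool" where
  "valid_assignment n k p \<longleftrightarrow> (\<forall>S \<in> msets n k. length (p S) = n \<and> mset (p S) = S)"

definition hamming :: "'a list \<Rightarrow> 'a list \<Rightarrow> nat" where
  "hamming xs ys = card {i. i < length xs \<and> xs ! i \<noteq> ys ! i}"

definition symdiff_size :: "'a multiset \<Rightarrow> 'a multiset \<Rightarrow> nat" where
  "symdiff_size A B = size ((A - B) + (B - A))"

definition max_distortion :: "nat \<Rightarrow> nat \<Rightarrow> (nat multiset \<Rightarrow> nat list) \<Rightarrow> nat" where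
  "max_distortion n k p =
     Max {hamming (p S) (p S') | S S'. S \<in> msets n k \<and> S' \<in> msets n k \<and> symdiff_size S S' = 2}"

text \<open>Tower function: t_1(x) = x, t_{i+1}(x) = 2^{t_i(x)} (index 0 is unused; set to x).\<close>
fun tower :: "nat \<Rightarrow> real \<Rightarrow> real" where
  "tower 0 x = x"
| "tower (Suc 0) x = x"
| "tower (Suc (Suc i)) x = 2 powr (tower (Suc i) x)"

end

theory Submission
  imports Defs
begin

definition S4 :: "nat \<Rightarrow> nat \<Rightarrow> nat \<Rightarrow> nat \<Rightarrow> nat \<Rightarrow> nat multiset" where
  "S4 n a b c d = replicate_mset (n-4) 1 + {#a,b,c,d#}"

definition pos :: "nat list \<Rightarrow> nat \<Rightarrow> nat" where
  "pos xs a = (LEAST i. i < length xs \<and> xs ! i = a)"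

lemma pos: "a \<in> set xs \<Longrightarrow> pos xs a < length xs \<and> xs ! pos xs a = a"
  unfolding pos_def by (rule LeastI_ex) (auto simp: in_set_conv_nth)

lemma S4_msets: "n \<ge> 4 \<Longrightarrow> a \<in> {1..k} \<Longrightarrow> b \<in> {1..k} \<Longrightarrow> c \<in> {1..k} \<Longrightarrow> d \<in> {1..k}
   \<Longrightarrow> S4 n a b c d \<in> msets n k"
  unfolding S4_def msets_def by (auto simp: in_replicate_mset)

lemma in_S4: "n \<ge> 4 \<Longrightarrow> a \<in># S4 n a b c d \<and> b \<in># S4 n a b c d \<and> c \<in># S4 n a b c d \<and> d \<in># S4 n a b c d"
  unfolding S4_def by auto

definition F4 where
  "F4 p n a b c d = (pos (p (S4 n a b c d)) a, pos (p (S4 n a b c d)) b, pos (p (S4 n a b c d)) c, pos (p (S4 n a b c d)) d)"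
definition F3 where "F3 p n k a b c = (\<lambda>y. F4 p n a b c y) ` {c<..k}"
definition F2 where "F2 p n k a b = (\<lambda>y. F3 p n k a b y) ` {b<..k}"
definition F1 where "F1 p n k a = (\<lambda>y. F2 p n k a y) ` {a<..k}"

definition C4 :: "nat \<Rightarrow> (nat \<times> nat \<times> nat \<times> nat) set" where
  "C4 n = {..<n} \<times> {..<n} \<times> {..<n} \<times> {..<n}"

lemma F4_in:
  assumes v: "valid_assignment n k p" and n: "n \<ge> 4" and "a \<in> {1..k}" "b \<in> {1..k}" "c \<in> {1..k}" "d \<in> {1..k}"
  shows "F4 p n a b c d \<in> C4 n"
proof -
  let ?S = "S4 n a b c d"
  have S: "?S \<in> msets n k" using assms S4_msets by blast
  hence L: "length (p ?S) = n" and M: "mset (p ?S) = ?S" using v unfolding valid_assignment_def by auto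
  have "x \<in> set (p ?S)" if "x \<in># ?S" for x using M that by (metis set_mset_mset)
  hence "pos (p ?S) x < n" if "x \<in># ?S" for x using that pos L by metis
  thus ?thesis using in_S4[OF n] unfolding F4_def C4_def by auto
qed

lemma F1_in:
  assumes v: "valid_assignment n k p" and n: "n \<ge> 4" and a: "a \<in> {1..k}"
  shows "F1 p n k a \<in> Pow (Pow (Pow (C4 n)))"
  using F4_in[OF v n] a unfolding F1_def F2_def F3_def by fastforce

lemma dist:
  assumes v: "valid_assignment n k p" and n: "n \<ge> 4"
    and a: "2 \<le> a1" "a1 < a2" "a2 < a3" "a3 < a4" "a4 < a5" "a5 \<le> k"
    and eq: "F4 p n a2 a3 a4 a5 = F4 p n a1 a2 a3 a4"
  shows "max_distortion n k p \<ge> 4"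
proof -
  let ?S = "S4 n a1 a2 a3 a4" and ?T = "S4 n a2 a3 a4 a5"
  have S: "?S \<in> msets n k" and T: "?T \<in> msets n k" using a n S4_msets by auto
  have L: "length (p ?S) = n" and M: "mset (p ?S) = ?S" using S v unfolding valid_assignment_def by auto
  have L': "length (p ?T) = n" and M': "mset (p ?T) = ?T" using T v unfolding valid_assignment_def by auto
  have inS: "x \<in> set (p ?S)" if "x \<in># ?S" for x using M that by (metis set_mset_mset)
  have inT: "x \<in> set (p ?T)" if "x \<in># ?T" for x using M' that by (metis set_mset_mset)
  define P1 where "P1 = pos (p ?S) a1"
  define P2 where "P2 = pos (p ?S) a2"
  define P3 where "P3 = pos (p ?S) a3"
  define P4 where "P4 = pos (p ?S) a4"
  have p1: "P1 < n" "p ?S ! P1 = a1" using pos[OF inS] in_S4[OF n] L unfolding P1_def by auto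
  have p2: "P2 < n" "p ?S ! P2 = a2" using pos[OF inS] in_S4[OF n] L unfolding P2_def by auto
  have p3: "P3 < n" "p ?S ! P3 = a3" using pos[OF inS] in_S4[OF n] L unfolding P3_def by auto
  have p4: "P4 < n" "p ?S ! P4 = a4" using pos[OF inS] in_S4[OF n] L unfolding P4_def by auto
  have e: "pos (p ?T) a2 = P1" "pos (p ?T) a3 = P2" "pos (p ?T) a4 = P3" "pos (p ?T) a5 = P4"
    using eq unfolding F4_def P1_def P2_def P3_def P4_def by auto
  have q: "p ?T ! P1 = a2" "p ?T ! P2 = a3" "p ?T ! P3 = a4" "p ?T ! P4 = a5"
    using pos[OF inT] in_S4[OF n] e by metis+
  have sub: "{P1,P2,P3,P4} \<subseteq> {i. i < length (p ?S) \<and> p ?S ! i \<noteq> p ?T ! i}"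
    using p1 p2 p3 p4 q L a by auto
  have c4: "card {P1,P2,P3,P4} = 4" proof -
    have "P1 \<noteq> P2" "P1 \<noteq> P3" "P1 \<noteq> P4" "P2 \<noteq> P3" "P2 \<noteq> P4" "P3 \<noteq> P4"
      using p1 p2 p3 p4 a by (metis less_irrefl order.strict_trans)+
    thus ?thesis by simp
  qed
  have h: "hamming (p ?S) (p ?T) \<ge> 4" unfolding hamming_def
    by (metis c4 card_mono finite_Collect_conjI finite_Collect_less_nat sub)
  have sd: "symdiff_size ?S ?T = 2"
  proof -
    define A where "A = replicate_mset (n-4) 1 + {#a2,a3,a4#}"
    have "?S = A + {#a1#}" "?T = A + {#a5#}" unfolding A_def S4_def by (auto simp: add_mset_commute)
    hence "?S - ?T = {#a1#}" "?T - ?S = {#a5#}" using a by auto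
    thus ?thesis unfolding symdiff_size_def by simp
  qed
  let ?M = "{hamming (p S) (p S') | S S'. S \<in> msets n k \<and> S' \<in> msets n k \<and> symdiff_size S S' = 2}"
  have fin: "finite ?M"
  proof (rule finite_subset)
    show "?M \<subseteq> {..n}"
    proof
      fix x assume "x \<in> ?M"
      then obtain S S' where x: "x = hamming (p S) (p S')" and "S \<in> msets n k" by blast
      hence "length (p S) = n" using v unfolding valid_assignment_def by auto
      hence "x \<le> card {..<n}" unfolding x hamming_def by (intro card_mono) auto
      thus "x \<in> {..n}" by simp
    qed
  qed simp
  have "hamming (p ?S) (p ?T) \<in> ?M" using S T sd by blast
  hence "hamming (p ?S) (p ?T) \<le> Max ?M" using fin by simp
  thus ?thesis unfolding max_distortion_def using h by linarith
qed

lemma card_C4: "card (Pow (Pow (Pow (C4 n)))) = 2^2^2^(n^4)"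
  unfolding C4_def by (simp add: card_Pow card_cartesian_product power4_eq_xxxx)

lemma main_k:
  assumes v: "valid_assignment n k p" and n: "n \<ge> 4" and k: "k \<ge> 2^2^2^(n^4) + 2"
  shows "max_distortion n k p \<ge> 4"
proof -
  have "\<not> inj_on (F1 p n k) {2..k}"
  proof
    assume "inj_on (F1 p n k) {2..k}"
    moreover have "F1 p n k ` {2..k} \<subseteq> Pow (Pow (Pow (C4 n)))" by (intro image_subsetI F1_in[OF v n]) auto
    ultimately have "card {2..k} \<le> card (Pow (Pow (Pow (C4 n))))"
      by (intro card_inj_on_le) (auto simp: C4_def)
    thus False using k card_C4[of n] by simp
  qed
  then obtain x y where xy: "x \<in> {2..k}" "y \<in> {2..k}" "x \<noteq> y" "F1 p n k x = F1 p n k y"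
    unfolding inj_on_def by blast
  obtain a1 a2 where a: "2 \<le> a1" "a1 < a2" "a2 \<le> k" and e1: "F1 p n k a1 = F1 p n k a2"
    using xy by (metis atLeastAtMost_iff linorder_neqE_nat)
  have "F2 p n k a1 a2 \<in> F1 p n k a1" using a unfolding F1_def by auto
  hence "F2 p n k a1 a2 \<in> F1 p n k a2" using e1 by simp
  then obtain a3 where a3: "a2 < a3" "a3 \<le> k" and e2: "F2 p n k a1 a2 = F2 p n k a2 a3"
    unfolding F1_def by auto
  have "F3 p n k a1 a2 a3 \<in> F2 p n k a1 a2" using a3 unfolding F2_def by auto
  hence "F3 p n k a1 a2 a3 \<in> F2 p n k a2 a3" using e2 by simp
  then obtain a4 where a4: "a3 < a4" "a4 \<le> k" and e3: "F3 p n k a1 a2 a3 = F3 p n k a2 a3 a4"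
    unfolding F2_def by auto
  have "F4 p n a1 a2 a3 a4 \<in> F3 p n k a1 a2 a3" using a4 unfolding F3_def by auto
  hence "F4 p n a1 a2 a3 a4 \<in> F3 p n k a2 a3 a4" using e3 by simp
  then obtain a5 where a5: "a4 < a5" "a5 \<le> k" and e4: "F4 p n a1 a2 a3 a4 = F4 p n a2 a3 a4 a5"
    unfolding F3_def by auto
  show ?thesis using dist[OF v n, of a1 a2 a3 a4 a5] a a3 a4 a5 e4 by simp
qed

fun nt :: "nat \<Rightarrow> nat \<Rightarrow> nat" where
  "nt 0 m = m" | "nt (Suc i) m = 2 ^ nt i m"

lemma tower_nt: "tower (Suc i) (real m) = real (nt i m)"
proof (induction i)
  case (Suc i)
  show ?case using Suc by (simp add: powr_realpow)
qed simp

lemma nt_step: "nt j m \<le> nt (Suc j) m"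
proof -
  have "nt j m < 2 ^ nt j m" by (rule less_exp)
  thus ?thesis by simp
qed

lemma nt_mono: "i \<le> j \<Longrightarrow> nt i m \<le> nt j m"
proof (induction j)
  case 0
  thus ?case by simp
next
  case (Suc j)
  show ?case
  proof (cases "i = Suc j")
    case True thus ?thesis by simp
  next
    case False
    hence "i \<le> j" using Suc.prems by simp
    thus ?thesis using Suc.IH nt_step[of j m] by (rule_tac order.trans) auto
  qed
qed

lemma L3: "(A::nat) < B \<Longrightarrow> (2::nat)^2^2^A + 2 \<le> 2^2^2^B"
proof -
  assume h: "A < B"
  have h1: "(2::nat)^A < 2^B" using h by (rule power_strict_increasing) auto
  have h2: "(2::nat)^2^A < 2^2^B" using h1 by (rule power_strict_increasing) auto
  have h3: "(2::nat)^Suc (2^2^A) \<le> 2^2^2^B" using Suc_leI[OF h2] by (rule power_increasing) auto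
  have h4: "(1::nat) \<le> 2^2^A" by (rule one_le_power) auto
  have h5: "(2::nat)^1 \<le> 2^2^2^A" using h4 by (rule power_increasing) auto
  have h6: "(2::nat)^Suc (2^2^A) = 2 * 2^2^2^A" by (rule power_Suc)
  have h7: "(2::nat) \<le> 2^2^2^A" using h5 by (simp only: power_one_right)
  show ?thesis using h3 h7 h6 by linarith
qed

lemma big:
  assumes n: "n \<ge> 5" and k: "real k \<ge> tower (n - 1) (126 * real n)"
  shows "k \<ge> 2^2^2^(n^4) + 2"
proof -
  have "tower (n - 1) (126 * real n) = real (nt (n - 2) (126 * n))"
    using tower_nt[of "n - 2" "126 * n"] n by (simp add: Suc_diff_Suc numeral_2_eq_2)
  hence k1: "k \<ge> nt (n - 2) (126 * n)" using k by linarith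
  show ?thesis
  proof (cases "n = 5")
    case True
    have "nt 3 (126 * n) \<le> nt (n - 2) (126 * n)" using True by simp
    moreover have "nt 3 (126 * n) = 2^2^2^(126*n)" by (simp add: numeral_3_eq_3)
    moreover have "n^4 < 126 * n" using True by simp
    ultimately show ?thesis using L3[of "n^4" "126*n"] k1 by linarith
  next
    case False
    hence "nt 4 (126 * n) \<le> nt (n - 2) (126 * n)" using n by (intro nt_mono) simp
    moreover have "nt 4 (126 * n) = 2^2^2^(2^(126*n))" by (simp add: numeral_eq_Suc)
    moreover have "n^4 < 2^(126*n)"
    proof -
      have "n < 2^n" by (rule less_exp)
      hence "n^4 < (2^n)^4" by (rule power_strict_mono) auto
      also have "((2::nat)^n)^4 = 2^(n*4)" by (rule power_mult[symmetric])
      also have "(2::nat)^(n*4) \<le> 2^(126*n)" by (rule power_increasing) auto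
      finally show ?thesis .
    qed
    ultimately show ?thesis using L3[of "n^4" "2^(126*n)"] k1 by linarith
  qed
qed

theorem theorem2:
  shows "(\<exists>c::real. \<forall>n k. n \<ge> 5 \<and> real k \<ge> tower (n - 1) (c * real n) \<longrightarrow>
            (\<forall>p. valid_assignment n k p \<longrightarrow> max_distortion n k p \<ge> 4))
       \<and> (\<exists>n k. n \<ge> 1 \<and> k \<ge> 1 \<and> (\<forall>p. valid_assignment n k p \<longrightarrow> max_distortion n k p \<ge> 4))"
proof
  have A: "\<forall>n k. n \<ge> 5 \<and> real k \<ge> tower (n - 1) (126 * real n) \<longrightarrow>
            (\<forall>p. valid_assignment n k p \<longrightarrow> max_distortion n k p \<ge> 4)"
  proof (intro allI impI)
    fix n k p assume h: "5 \<le> n \<and> tower (n - 1) (126 * real n) \<le> real k" and v: "valid_assignment n k p"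
    show "max_distortion n k p \<ge> 4"
      using main_k[OF v _ big] h by auto
  qed
  thus "\<exists>c::real. \<forall>n k. n \<ge> 5 \<and> real k \<ge> tower (n - 1) (c * real n) \<longrightarrow>
            (\<forall>p. valid_assignment n k p \<longrightarrow> max_distortion n k p \<ge> 4)" by blast
  obtain k :: nat where k: "real k \<ge> tower (5 - 1) (126 * real (5::nat))"
    using real_arch_simple by blast
  have k1: "1 \<le> k"
    using order.trans[OF _ big[OF order.refl k]] by (metis le_add2 one_le_numeral order.trans)
  have "\<forall>p. valid_assignment 5 k p \<longrightarrow> max_distortion 5 k p \<ge> 4"
    using A[rule_format, OF conjI[OF order.refl k]] by blast
  moreover have "(1::nat) \<le> 5" by (rule one_le_numeral)
  ultimately show "\<exists>n k. n \<ge> 1 \<and> k \<ge> 1 \<and> (\<forall>p. valid_assignment n k p \<longrightarrow> max_distortion n k p \<ge> 4)"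
    using k1 by blast
qed

end
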